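(* If $\mathcal{X}$ is infinite, there is no consistent hypothesis test for condition $\mathrm{FS}$: for every sequence of (possibly randomized) decision functions $\hat t_n:\mathcal{X}^n\to\{0,1\}$ there exists a process $\mathbb{X}$ on $\mathcal{X}$ such that $\hat t_n(X_1,\dots,X_n)$ does not converge in probability to $\mathbb{1}_{\mathbb{X}\in\mathrm{FS}}$.
   Context: $\mathrm{FS}$ is the set of stochastic processes $\mathbb{X}=(X_t)_{t\ge1}$ on $\mathcal{X}$ that take only finitely many distinct values almost surely. A hypothesis test is a sequence of possibly random decision functions $\hat t_n$ applied to $(X_1,\dots,X_n)$; it is consistent for a class $\mathcal{C}$ of processes if for every process $\mathbb{X}$, $\hat t_n(X_1,\dots,X_n)\to\mathbb{1}_{\mathbb{X}\in\mathcal{C}}$ in probability. *)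

theory Defs
  imports "HOL-Probability.Probability"
begin

text \<open>The canonical sample space of a process on 'a: sequences indexed by time (time 0 here
  corresponds to time 1 in the paper), with the product Borel sigma-algebra.\<close>
abbreviation seq_space :: "(nat \<Rightarrow> 'a::topological_space) measure" where
  "seq_space \<equiv> PiM UNIV (\<lambda>_. borel)"

definition FS :: "(nat \<Rightarrow> 'a) measure \<Rightarrow> bool" where
  "FS \<mu> \<longleftrightarrow> (AE x in \<mu>. finite (range x))"

definition conv_in_prob :: "'b measure \<Rightarrow> (nat \<Rightarrow> 'b \<Rightarrow> real) \<Rightarrow> real \<Rightarrow> bool" where
  "conv_in_prob P Y c \<longleftrightarrow>
     (\<forall>e>0. (\<lambda>n. measure P {\<omega> \<in> space P. \<bar>Y n \<omega> - c\<bar> > e}) \<longlonglongrightarrow> 0)"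

end

theory Submission
  imports Defs
begin

abbreviation U :: "real measure" where "U \<equiv> uniform_measure lborel {0..1::real}"

lemma U_prob: "prob_space U"
  by (intro prob_space_uniform_measure) auto

lemma space_seq: "space (seq_space :: (nat \<Rightarrow> 'a::topological_space) measure) = UNIV"
  by (simp add: space_PiM)

lemma slice_measure:
  fixes f :: "(nat \<Rightarrow> 'a::topological_space) \<times> real \<Rightarrow> real"
  assumes f: "f \<in> borel_measurable (seq_space \<Otimes>\<^sub>M (borel :: real measure))"
  shows "measure (return seq_space x \<Otimes>\<^sub>M U) {\<omega> \<in> space (return seq_space x \<Otimes>\<^sub>M U). e < \<bar>f \<omega> - c\<bar>}
       = measure U {u. e < \<bar>f (x, u) - c\<bar>}"
proof -
  interpret U: prob_space U by (rule U_prob)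
  have sx: "x \<in> space seq_space" by (simp add: space_seq)
  have fm: "f \<in> borel_measurable (return seq_space x \<Otimes>\<^sub>M U)"
    using f by (simp add: measurable_cong_sets[OF sets_pair_measure_cong[OF sets_return]])
  have A: "{\<omega> \<in> space (return seq_space x \<Otimes>\<^sub>M U). e < \<bar>f \<omega> - c\<bar>} \<in> sets (return seq_space x \<Otimes>\<^sub>M U)"
  proof -
    have "(\<lambda>\<omega>. \<bar>f \<omega> - c\<bar>) \<in> borel_measurable (return seq_space x \<Otimes>\<^sub>M U)"
      using fm by measurable
    then show ?thesis by (simp add: borel_measurable_iff_greater)
  qed
  have "emeasure (return seq_space x \<Otimes>\<^sub>M U) {\<omega> \<in> space (return seq_space x \<Otimes>\<^sub>M U). e < \<bar>f \<omega> - c\<bar>}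
     = emeasure U (Pair x -` {\<omega> \<in> space (return seq_space x \<Otimes>\<^sub>M U). e < \<bar>f \<omega> - c\<bar>})"
    apply (subst U.emeasure_pair_measure_alt[OF A])
    apply (rule nn_integral_return)
    using sx apply simp
    using U.measurable_emeasure_Pair[OF A] by simp
  also have "Pair x -` {\<omega> \<in> space (return seq_space x \<Otimes>\<^sub>M U). e < \<bar>f \<omega> - c\<bar>} = {u. e < \<bar>f (x, u) - c\<bar>}"
    by (auto simp: space_pair_measure space_seq)
  finally show ?thesis by (simp add: measure_def)
qed

lemma singleton_seq:
  "{x} \<in> sets (seq_space :: (nat \<Rightarrow> 'a::metric_space) measure)"
proof -
  have "{x} = (\<Inter>i. {y \<in> space (seq_space :: (nat \<Rightarrow> 'a) measure). y i \<in> {x i}})"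
    by (auto simp: space_seq)
  also have "\<dots> \<in> sets (seq_space :: (nat \<Rightarrow> 'a) measure)"
    by (intro sets.countable_INT' measurable_sets[OF measurable_component_singleton]) (auto intro: borel_closed)
  finally show ?thesis .
qed

lemma FS_return:
  fixes x :: "nat \<Rightarrow> 'a::metric_space"
  shows "FS (return seq_space x) \<longleftrightarrow> finite (range x)"
proof
  assume "FS (return seq_space x)"
  then obtain N where N: "{y \<in> space (return seq_space x). \<not> finite (range y)} \<subseteq> N"
    "N \<in> null_sets (return seq_space x)"
    using \<open>FS (return seq_space x)\<close> unfolding FS_def by (elim AE_E) blast
  show "finite (range x)"
  proof (rule ccontr)
    assume "infinite (range x)"
    then have "x \<in> N" using N(1) by (auto simp: space_seq)
    then show False using N(2) by (auto simp: null_sets_def indicator_def)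
  qed
next
  assume fin: "finite (range x)"
  show "FS (return seq_space x)"
    unfolding FS_def
    apply (rule AE_I[where N="space seq_space - {x}"])
    using fin singleton_seq[of x] sets.compl_sets[OF singleton_seq[of x]] by (auto simp: space_seq)
qed
theorem proposition4:
  fixes t :: "nat \<Rightarrow> (nat \<Rightarrow> 'a::{metric_space, second_countable_topology}) \<Rightarrow> real \<Rightarrow> real"
  assumes "infinite (UNIV :: 'a set)"
    and "\<forall>n. (\<lambda>(x, u). t n x u) \<in> borel_measurable (seq_space \<Otimes>\<^sub>M (borel :: real measure))"
    and "\<forall>n x u. t n x u \<in> {0, 1}"
    and "\<forall>n x y u. (\<forall>i<n. x i = y i) \<longrightarrow> t n x u = t n y u"
  shows "\<exists>\<mu> :: (nat \<Rightarrow> 'a) measure. prob_space \<mu> \<and> sets \<mu> = sets seq_space \<and>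
           \<not> conv_in_prob (\<mu> \<Otimes>\<^sub>M uniform_measure lborel {0..1::real})
               (\<lambda>n (x, u). t n x u) (if FS \<mu> then 1 else 0)"
proof (rule ccontr)
  assume "\<not> ?thesis"
  then have H: "\<And>\<mu> :: (nat \<Rightarrow> 'a) measure. prob_space \<mu> \<Longrightarrow> sets \<mu> = sets seq_space \<Longrightarrow>
     conv_in_prob (\<mu> \<Otimes>\<^sub>M U) (\<lambda>n (x, u). t n x u) (if FS \<mu> then 1 else 0)" by blast
  interpret U: prob_space U by (rule U_prob)
  have conv: "(\<lambda>n. measure U {u. 1/2 < \<bar>t n x u - (if finite (range x) then 1 else 0)\<bar>}) \<longlonglongrightarrow> 0" for x
  proof -
    have "conv_in_prob (return seq_space x \<Otimes>\<^sub>M U) (\<lambda>n (x, u). t n x u) (if FS (return seq_space x) then 1 else 0)"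
      by (rule H) (auto intro!: prob_space_return simp: space_seq)
    then have "(\<lambda>n. measure (return seq_space x \<Otimes>\<^sub>M U) {\<omega> \<in> space (return seq_space x \<Otimes>\<^sub>M U).
        1/2 < \<bar>(\<lambda>(x, u). t n x u) \<omega> - (if finite (range x) then 1 else 0)\<bar>}) \<longlonglongrightarrow> 0"
    proof -
      have "\<forall>e>0. (\<lambda>n. measure (return seq_space x \<Otimes>\<^sub>M U) {\<omega> \<in> space (return seq_space x \<Otimes>\<^sub>M U).
        e < \<bar>(\<lambda>(x, u). t n x u) \<omega> - (if finite (range x) then 1 else 0)\<bar>}) \<longlonglongrightarrow> 0"
        using \<open>conv_in_prob _ _ _\<close> unfolding conv_in_prob_def FS_return .
      from spec[OF this, of "1/2"] show ?thesis by simp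
    qed
    moreover have "measure (return seq_space x \<Otimes>\<^sub>M U) {\<omega> \<in> space (return seq_space x \<Otimes>\<^sub>M U).
        1/2 < \<bar>(\<lambda>(x, u). t n x u) \<omega> - (if finite (range x) then 1 else 0)\<bar>}
       = measure U {u. 1/2 < \<bar>t n x u - (if finite (range x) then 1 else 0)\<bar>}" for n
      using slice_measure[OF assms(2)[rule_format, of n], where x=x and e="1/2" and c="if finite (range x) then 1 else 0"]
      by simp
    ultimately show ?thesis by simp
  qed
  define A where "A n x = {u. t n x u = 1}" for n x
  have Ameas: "A n x \<in> sets U" for n x
  proof -
    have "(\<lambda>u. (\<lambda>(x, u). t n x u) (x, u)) \<in> borel_measurable borel"
      by (rule measurable_Pair2[OF assms(2)[rule_format]]) (simp add: space_seq)
    then have "(\<lambda>u. t n x u) \<in> borel_measurable borel" by simp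
    then have "{u \<in> space borel. t n x u = 1} \<in> sets borel" by measurable
    then show ?thesis by (simp add: A_def)
  qed
  have fin: "\<exists>n\<ge>m. 1/2 < measure U (A n x)" if "finite (range x)" for x m
  proof -
    have "(\<lambda>n. measure U {u. 1/2 < \<bar>t n x u - 1\<bar>}) \<longlonglongrightarrow> 0" using conv[of x] that by simp
    moreover have "{u. 1/2 < \<bar>t n x u - 1\<bar>} = space U - A n x" for n
      apply (auto simp: A_def)
      subgoal for u using assms(3)[rule_format, of n x u] by auto
      done
    ultimately have "(\<lambda>n. 1 - measure U (A n x)) \<longlonglongrightarrow> 0"
      using U.prob_compl[OF Ameas] by simp
    then have "eventually (\<lambda>n. 1 - measure U (A n x) < 1/2) sequentially"
      by (rule order_tendstoD) simp
    then obtain N where "\<And>n. n \<ge> N \<Longrightarrow> 1 - measure U (A n x) < 1/2"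
      unfolding eventually_sequentially by blast
    then show ?thesis by (intro exI[of _ "max N m"]) auto
  qed
  have inf: "(\<lambda>n. measure U (A n x)) \<longlonglongrightarrow> 0" if "infinite (range x)" for x
  proof -
    have "{u. 1/2 < \<bar>t n x u - 0\<bar>} = A n x" for n
      apply (auto simp: A_def)
      subgoal for u using assms(3)[rule_format, of n x u] by auto
      done
    then show ?thesis using conv[of x] that by simp
  qed
  obtain a :: "nat \<Rightarrow> 'a" where a: "inj a" using infinite_countable_subset[OF assms(1)] by blast
  define ch where "ch x m = (SOME n. m \<le> n \<and> 1/2 < measure U (A n x))" for x m
  have ch: "m \<le> ch x m \<and> 1/2 < measure U (A (ch x m) x)" if "finite (range x)" for x m
    unfolding ch_def using someI_ex[OF fin[OF that, of m]] by simp
  define S where "S = rec_nat ((\<lambda>_. a 0), ch (\<lambda>_. a 0) 0)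
     (\<lambda>k p. (\<lambda>i. if i < snd p then fst p i else a (Suc k),
             ch (\<lambda>i. if i < snd p then fst p i else a (Suc k)) (Suc (snd p))))"
  have S0: "S 0 = ((\<lambda>_. a 0), ch (\<lambda>_. a 0) 0)" unfolding S_def by simp
  have SS: "S (Suc k) = (\<lambda>i. if i < snd (S k) then fst (S k) i else a (Suc k),
             ch (\<lambda>i. if i < snd (S k) then fst (S k) i else a (Suc k)) (Suc (snd (S k))))" for k
    unfolding S_def by simp
  define X where "X k = fst (S k)" for k
  define Nk where "Nk k = snd (S k)" for k
  have X0: "X 0 = (\<lambda>_. a 0)" and N0: "Nk 0 = ch (\<lambda>_. a 0) 0"
    unfolding X_def Nk_def by (simp_all add: S0 SS)
  have XS: "X (Suc k) = (\<lambda>i. if i < Nk k then X k i else a (Suc k))"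
    and NS': "Nk (Suc k) = ch (\<lambda>i. if i < Nk k then X k i else a (Suc k)) (Suc (Nk k))" for k
    unfolding X_def Nk_def by (simp_all add: S0 SS)
  have NS: "Nk (Suc k) = ch (X (Suc k)) (Suc (Nk k))" for k
    using NS' XS by simp
  have rng: "range (X k) \<subseteq> a ` {..k}" for k
    by (induction k) (auto simp: X0 XS, meson atMost_iff image_mono le_SucI rangeI subset_iff subset_refl)
  then have finX: "finite (range (X k))" for k
    by (meson finite_atMost finite_imageI finite_subset)
  have NSge: "Suc (Nk k) \<le> Nk (Suc k)" for k
    using ch[OF finX[of "Suc k"]] by (simp add: NS)
  have big: "1/2 < measure U (A (Nk k) (X k))" for k
    using ch[OF finX[of k]] by (cases k) (auto simp: N0 X0 NS)
  have Nge: "k \<le> Nk k" for k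
    by (induction k) (use NSge in \<open>auto intro: order_trans[OF _ NSge]\<close>)
  have Nmono: "Nk k \<le> Nk k'" if "k \<le> k'" for k k'
    using that
  proof (induction k' rule: dec_induct)
    case (step m) then show ?case using NSge[of m] by simp
  qed simp
  have agree: "X k' i = X k i" if "k \<le> k'" "i < Nk k" for k k' i
    using that(1)
  proof (induction k' rule: dec_induct)
    case (step m)
    have "i < Nk m" using that(2) Nmono[OF step(1)] by simp
    then show ?case using step by (simp add: XS)
  qed simp
  define y where "y i = X (Suc i) i" for i
  have yagree: "y i = X k i" if "i < Nk k" for i k
  proof -
    have "i < Nk (Suc i)" using Nge[of "Suc i"] by simp
    then have "X (max k (Suc i)) i = X (Suc i) i" by (intro agree) auto
    moreover have "X (max k (Suc i)) i = X k i" using that by (intro agree) auto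
    ultimately show ?thesis by (simp add: y_def)
  qed
  have "y (Nk k) = a (Suc k)" for k
    using yagree[of "Nk k" "Suc k"] NSge[of k] by (simp add: XS)
  then have "range (a \<circ> Suc) \<subseteq> range y" by (auto simp: image_iff) (metis)
  moreover have "infinite (range (a \<circ> Suc))"
    using a by (intro range_inj_infinite inj_compose inj_Suc) (auto simp: inj_Suc)
  ultimately have "infinite (range y)" using finite_subset by blast
  from inf[OF this] have "eventually (\<lambda>n. measure U (A n y) < 1/2) sequentially"
    by (rule order_tendstoD) simp
  then obtain M where M: "\<And>n. n \<ge> M \<Longrightarrow> measure U (A n y) < 1/2"
    unfolding eventually_sequentially by blast
  have "A (Nk M) y = A (Nk M) (X M)"
  proof -
    have "t (Nk M) y u = t (Nk M) (X M) u" for u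
      using assms(4)[rule_format, of "Nk M" y "X M" u] yagree[of _ M] by blast
    then show ?thesis by (simp add: A_def)
  qed
  then show False using M[OF Nge[of M]] big[of M] by simp
qed

end
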